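(* Let $X$ and $Y$ be random variables taking values in the non-negative integers with zero-inflated marginal cdfs $F(s)=(1-\pi_F)+\pi_F\bar F(s)$ and $G(t)=(1-\pi_G)+\pi_G\bar G(t)$ for $s,t\ge0$ (zero for negative arguments), where $\bar F,\bar G$ are discrete distribution functions. Let $p_1=\mathbb{P}[X=0]=F(0)$ and $p_2=\mathbb{P}[Y=0]=G(0)$. For a joint distribution $H$ of $(X,Y)$ with these marginals, let $\tau_A$ denote Kendall's $\tau$ of $(X,Y)$, i.e. $\tau_A=\mathbb{P}[(\tilde X_1-\tilde X_2)(\tilde Y_1-\tilde Y_2)>0]-\mathbb{P}[(\tilde X_1-\tilde X_2)(\tilde Y_1-\tilde Y_2)<0]$ for two independent copies $(\tilde X_1,\tilde Y_1),(\tilde X_2,\tilde Y_2)$ of $(X,Y)$. Let $\tilde s$ be a point with $F(\tilde s)>p_2$ and $F(\tilde s-1)\le p_2$; $\tilde t$ a point with $G(\tilde t)>p_1$ and $G(\tilde t-1)\le p_1$; $\tilde s'$ a point with $F(\tilde s')+p_2-1>0$ and $F(\tilde s'-1)+p_2-1\le 0$; $\tilde t'$ a point with $G(\tilde t')+p_1-1>0$ and $G(\tilde t'-1)+p_1-1\le0$. Let $p^U_{t_{11}}$ (resp. $p^L_{t_{11}}$) be the probability that, for two independent copies of $(X,Y)$ conditioned on $\{X>0,Y>0\}$, the $X$-components or the $Y$-components are tied, when $H$ is the upper Fréchet–Hoeffding bound $H(x,y)=\min\{F(x),G(y)\}$ (resp. the lower Fréchet–Hoeffding bound $H(x,y)=\max\{F(x)+G(y)-1,0\}$).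 Then, over joint distributions $H$ with marginals $F$ and $G$, the upper and lower bounds of $\tau_A$ are $$\tau_A^{upper}=\begin{cases}(1-p_2^2)-(1-p_2)^2p^U_{t_{11}}-2(p_2-F(\tilde s-1))(F(\tilde s)-p_2), & p_1\le p_2,\\ (1-p_1^2)-(1-p_1)^2p^U_{t_{11}}-2(p_1-G(\tilde t-1))(G(\tilde t)-p_1), & p_1\ge p_2,\end{cases}$$ $$\tau_A^{lower}=\begin{cases}-2(1-p_1)(1-p_2), & 1-p_1-p_2<0,\\ p_1^2+p_2^2-1+(1-p_1-p_2)^2p^L_{t_{11}}+2\big[(F(\tilde s')+p_2-1)(1-p_2-F(\tilde s'-1))+(G(\tilde t')+p_1-1)(1-p_1-G(\tilde t'-1))\big], & 1-p_1-p_2>0.\end{cases}$$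
   Context: The upper Fréchet–Hoeffding bound $\min\{F(x),G(y)\}$ and lower bound $\max\{F(x)+G(y)-1,0\}$ are the pointwise maximal and minimal joint cdfs with marginals $F$ and $G$. *)

theory Defs
  imports "HOL-Probability.Probability"
begin

text \<open>Joint distributions of (X,Y) on the non-negative integers are modelled as pmfs on nat \<times> nat.
  Cdfs are functions on the integers (so that F(s-1) makes sense at s = 0, with value 0).\<close>

definition joint_cdf :: "(nat \<times> nat) pmf \<Rightarrow> int \<Rightarrow> int \<Rightarrow> real" where
  "joint_cdf H x y = measure_pmf.prob H {(a, b). int a \<le> x \<and> int b \<le> y}"

definition nat_cdf :: "nat pmf \<Rightarrow> int \<Rightarrow> real" where
  "nat_cdf P s = measure_pmf.prob P {n. int n \<le> s}"

definition couplings :: "(int \<Rightarrow> real) \<Rightarrow> (int \<Rightarrow> real) \<Rightarrow> (nat \<times> nat) pmf set" where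
  "couplings F G = {H. (\<forall>s. measure_pmf.prob H {(a, b). int a \<le> s} = F s) \<and>
                       (\<forall>t. measure_pmf.prob H {(a, b). int b \<le> t} = G t)}"

definition pmf_of_joint_cdf :: "(int \<Rightarrow> int \<Rightarrow> real) \<Rightarrow> (nat \<times> nat) pmf" where
  "pmf_of_joint_cdf C = embed_pmf (\<lambda>(a, b).
      C (int a) (int b) - C (int a - 1) (int b) - C (int a) (int b - 1) + C (int a - 1) (int b - 1))"

definition FH_upper :: "(int \<Rightarrow> real) \<Rightarrow> (int \<Rightarrow> real) \<Rightarrow> (nat \<times> nat) pmf" where
  "FH_upper F G = pmf_of_joint_cdf (\<lambda>x y. min (F x) (G y))"

definition FH_lower :: "(int \<Rightarrow> real) \<Rightarrow> (int \<Rightarrow> real) \<Rightarrow> (nat \<times> nat) pmf" where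
  "FH_lower F G = pmf_of_joint_cdf (\<lambda>x y. max (F x + G y - 1) 0)"

definition kendall_tau :: "(nat \<times> nat) pmf \<Rightarrow> real" where
  "kendall_tau H =
     measure_pmf.prob (pair_pmf H H)
       {((x1, y1), (x2, y2)). (int x1 - int x2) * (int y1 - int y2) > 0}
   - measure_pmf.prob (pair_pmf H H)
       {((x1, y1), (x2, y2)). (int x1 - int x2) * (int y1 - int y2) < 0}"

definition tie_prob_11 :: "(nat \<times> nat) pmf \<Rightarrow> real" where
  "tie_prob_11 H =
     (let Q = cond_pmf H {(a, b). a > 0 \<and> b > 0} in
      measure_pmf.prob (pair_pmf Q Q) {((x1, y1), (x2, y2)). x1 = x2 \<or> y1 = y2})"

end

theory Submission
  imports Defs
begin


lemma integral_pair_pmf_bounded: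
  fixes f :: "'a \<times> 'b \<Rightarrow> real"
  assumes "\<And>x. \<bar>f x\<bar> \<le> B"
  shows "measure_pmf.expectation (pair_pmf p q) f = (\<integral>a. (\<integral>b. f (a, b) \<partial>q) \<partial>p)"
proof -
  have "measure_pmf.expectation (pair_pmf p q) f =
        (\<integral>a. measure_pmf.expectation (bind_pmf q (\<lambda>b. return_pmf (a, b))) f \<partial>p)"
    unfolding pair_pmf_def
    apply (subst measure_pmf_bind)
    apply (subst integral_bind[where K="count_space UNIV" and B=B and B'=1])
    using assms by (auto intro!: measure_pmf.finite_measure simp: measure_pmf.emeasure_space_1 measure_pmf_in_subprob_algebra)
  also have "\<dots> = (\<integral>a. (\<integral>b. f (a, b) \<partial>q) \<partial>p)"
  proof (rule Bochner_Integration.integral_cong[OF refl])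
    fix a
    show "measure_pmf.expectation (bind_pmf q (\<lambda>b. return_pmf (a, b))) f = (\<integral>b. f (a, b) \<partial>q)"
      apply (subst measure_pmf_bind)
      apply (subst integral_bind[where K="count_space UNIV" and B=B and B'=1])
      using assms by (auto intro!: measure_pmf.finite_measure simp: measure_pmf.emeasure_space_1 measure_pmf_in_subprob_algebra)
  qed
  finally show ?thesis .
qed

lemma prob_pair_times:
  "measure_pmf.prob (pair_pmf p q) (A \<times> B) = measure_pmf.prob p A * measure_pmf.prob q B"
proof -
  have "measure_pmf.prob (pair_pmf p q) (A \<times> B) = measure_pmf.expectation (pair_pmf p q) (indicator (A \<times> B))"
    by simp
  also have "\<dots> = (\<integral>a. (\<integral>b. indicator (A \<times> B) (a, b) \<partial>q) \<partial>p)"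
    by (rule integral_pair_pmf_bounded[where B=1]) (auto simp: indicator_def)
  also have "\<dots> = (\<integral>a. (\<integral>b. indicator A a * indicator B b \<partial>q) \<partial>p)"
    by (simp only: indicator_times fst_conv snd_conv)
  also have "\<dots> = (\<integral>a. indicator A a * measure_pmf.prob q B \<partial>p)"
    by (simp only: integral_mult_right_zero integral_indicator) simp
  also have "\<dots> = measure_pmf.prob p A * measure_pmf.prob q B"
    by (simp only: integral_mult_left_zero integral_indicator) simp
  finally show ?thesis .
qed

lemma measure_cond_pmf:
  assumes "set_pmf p \<inter> s \<noteq> {}"
  shows "measure_pmf.prob (cond_pmf p s) A = measure_pmf.prob p (A \<inter> s) / measure_pmf.prob p s"
  using assms by (simp add: cond_pmf.rep_eq emeasure_measure_pmf_not_zero Int_commute)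

lemma cond_pair_pmf:
  assumes "set_pmf p \<inter> W \<noteq> {}"
  shows "pair_pmf (cond_pmf p W) (cond_pmf p W) = cond_pmf (pair_pmf p p) (W \<times> W)"
proof -
  have ne: "set_pmf (pair_pmf p p) \<inter> (W \<times> W) \<noteq> {}" using assms by auto
  show ?thesis
    by (rule pmf_eqI) (auto simp: pmf_pair pmf_cond[OF assms] pmf_cond[OF ne] prob_pair_times split: if_splits)
qed

lemma tie_cond:
  assumes "measure_pmf.prob p W > 0"
  shows "measure_pmf.prob (pair_pmf (cond_pmf p W) (cond_pmf p W)) T * (measure_pmf.prob p W)^2
         = measure_pmf.prob (pair_pmf p p) (T \<inter> W \<times> W)"
proof -
  have ne: "set_pmf p \<inter> W \<noteq> {}" using assms measure_pmf_zero_iff[of p W] by auto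
  have ne2: "set_pmf (pair_pmf p p) \<inter> (W \<times> W) \<noteq> {}" using ne by auto
  show ?thesis using assms
    by (simp add: cond_pair_pmf[OF ne] measure_cond_pmf[OF ne2] prob_pair_times power2_eq_square)
qed

lemma int_ind[simp, intro]: "integrable (measure_pmf p) (indicat_real S)"
  by (rule integrable_real_indicator) (auto simp: measure_pmf.emeasure_eq_measure)

definition sg :: "nat \<Rightarrow> nat \<Rightarrow> real" where
  "sg x c = real_of_int (sgn (int x - int c))"

definition kern :: "(nat \<times> nat) \<times> (nat \<times> nat) \<Rightarrow> real" where
  "kern z = sg (fst (fst z)) (fst (snd z)) * sg (snd (fst z)) (snd (snd z))"

lemma sg_bound: "\<bar>sg x c\<bar> \<le> 1"
  by (simp add: sg_def sgn_if)

lemma kern_bound: "\<bar>kern z\<bar> \<le> 1"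
  unfolding kern_def using sg_bound by (simp add: abs_mult mult_le_one)

lemma kern_ind:
  "kern = (\<lambda>z. indicator {((x1, y1), (x2, y2)). (int x1 - int x2) * (int y1 - int y2) > 0} z
            - indicator {((x1, y1), (x2, y2)). (int x1 - int x2) * (int y1 - int y2) < 0} z)"
proof
  fix z :: "(nat \<times> nat) \<times> (nat \<times> nat)"
  obtain x1 y1 x2 y2 where z: "z = ((x1, y1), (x2, y2))" by (metis prod.collapse)
  have "sgn (int x1 - int x2) * sgn (int y1 - int y2) = sgn ((int x1 - int x2) * (int y1 - int y2))"
    by (simp add: sgn_mult)
  then show "kern z = indicator {((x1, y1), (x2, y2)). (int x1 - int x2) * (int y1 - int y2) > 0} z
            - indicator {((x1, y1), (x2, y2)). (int x1 - int x2) * (int y1 - int y2) < 0} z"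
    unfolding z kern_def sg_def
    by (auto simp: indicator_def sgn_if split: if_splits)
qed

lemma tau_integral: "kendall_tau H = measure_pmf.expectation (pair_pmf H H) kern"
  unfolding kendall_tau_def kern_ind
  by (subst Bochner_Integration.integral_diff) auto

definition phi :: "(nat \<times> nat) pmf \<Rightarrow> nat \<Rightarrow> nat \<Rightarrow> real" where
  "phi k c d = measure_pmf.expectation k (\<lambda>z. sg c (fst z) * sg d (snd z))"

definition mF :: "(nat \<times> nat) pmf \<Rightarrow> int \<Rightarrow> real" where
  "mF k s = measure_pmf.prob k {(a, b). int a \<le> s}"
definition mG :: "(nat \<times> nat) pmf \<Rightarrow> int \<Rightarrow> real" where
  "mG k s = measure_pmf.prob k {(a, b). int b \<le> s}"

lemma phi_formula:
  "phi k c d = 1 - mF k (int c - 1) - mF k (int c) - mG k (int d - 1) - mG k (int d)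
     + joint_cdf k (int c - 1) (int d - 1) + joint_cdf k (int c - 1) (int d)
     + joint_cdf k (int c) (int d - 1) + joint_cdf k (int c) (int d)"
proof -
  define iA where "iA s = (indicator {(a::nat, b::nat). int a \<le> s} :: nat \<times> nat \<Rightarrow> real)" for s
  define iB where "iB s = (indicator {(a::nat, b::nat). int b \<le> s} :: nat \<times> nat \<Rightarrow> real)" for s
  define iJ where "iJ s t = (indicator {(a::nat, b::nat). int a \<le> s \<and> int b \<le> t} :: nat \<times> nat \<Rightarrow> real)" for s t
  have pw: "(\<lambda>z. sg c (fst z) * sg d (snd z)) = (\<lambda>z. 1 - iA (int c - 1) z - iA (int c) z - iB (int d - 1) z - iB (int d) z
     + iJ (int c - 1) (int d - 1) z + iJ (int c - 1) (int d) z + iJ (int c) (int d - 1) z + iJ (int c) (int d) z)"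
  proof
    fix z :: "nat \<times> nat"
    obtain a b where z: "z = (a, b)" by (metis prod.collapse)
    show "sg c (fst z) * sg d (snd z) = 1 - iA (int c - 1) z - iA (int c) z - iB (int d - 1) z - iB (int d) z
     + iJ (int c - 1) (int d - 1) z + iJ (int c - 1) (int d) z + iJ (int c) (int d - 1) z + iJ (int c) (int d) z"
      unfolding z iA_def iB_def iJ_def sg_def
      by (auto simp: indicator_def sgn_if)
  qed
  have iA: "integrable (measure_pmf k) (iA s)" for s unfolding iA_def by auto
  have iB: "integrable (measure_pmf k) (iB s)" for s unfolding iB_def by auto
  have iJ: "integrable (measure_pmf k) (iJ s t)" for s t unfolding iJ_def by auto
  have eA: "measure_pmf.expectation k (iA s) = mF k s" for s unfolding iA_def mF_def by simp
  have eB: "measure_pmf.expectation k (iB s) = mG k s" for s unfolding iB_def mG_def by simp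
  have eJ: "measure_pmf.expectation k (iJ s t) = joint_cdf k s t" for s t unfolding iJ_def joint_cdf_def by simp
  show ?thesis
    unfolding phi_def pw
    by (simp add: iA iB iJ eA eB eJ Bochner_Integration.integral_add Bochner_Integration.integral_diff)
qed

definition BB :: "(nat \<times> nat) pmf \<Rightarrow> (nat \<times> nat) pmf \<Rightarrow> real" where
  "BB h k = measure_pmf.expectation (pair_pmf h k) kern"

lemma phi_bound: "\<bar>phi k c d\<bar> \<le> 1"
proof -
  have "\<bar>phi k c d\<bar> \<le> measure_pmf.expectation k (\<lambda>z. \<bar>sg c (fst z) * sg d (snd z)\<bar>)"
    unfolding phi_def
    by (rule integral_abs_bound)
  also have "\<dots> \<le> measure_pmf.expectation k (\<lambda>z. 1)"
    using sg_bound
    by (intro integral_mono measure_pmf.integrable_const_bound[where B=1])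
       (auto simp: abs_mult mult_le_one)
  finally show ?thesis by simp
qed

lemma BB_phi: "BB h k = measure_pmf.expectation h (\<lambda>z. phi k (fst z) (snd z))"
  unfolding BB_def phi_def
  by (subst integral_pair_pmf_bounded[where B=1]) (simp_all add: kern_bound[unfolded kern_def] kern_def)

lemma BB_sym: "BB h k = BB k h"
proof -
  have "BB h k = measure_pmf.expectation (map_pmf (\<lambda>(x, y). (y, x)) (pair_pmf k h)) kern"
    unfolding BB_def by (subst pair_commute_pmf) simp
  also have "\<dots> = measure_pmf.expectation (pair_pmf k h) (\<lambda>z. kern (case z of (x, y) \<Rightarrow> (y, x)))"
    by simp
  also have "\<dots> = BB k h"
    unfolding BB_def
    by (rule Bochner_Integration.integral_cong[OF refl])
       (auto simp: kern_def sg_def split: prod.splits simp: sgn_if)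
  finally show ?thesis .
qed

lemma phi_int: "integrable (measure_pmf h) (\<lambda>z. phi k (fst z) (snd z))"
  using phi_bound by (intro measure_pmf.integrable_const_bound[where B=1]) auto

lemma tau_mono:
  assumes "\<And>s. mF h s = mF k s" "\<And>s. mG h s = mG k s"
    and "\<And>x y. joint_cdf h x y \<le> joint_cdf k x y"
  shows "kendall_tau h \<le> kendall_tau k"
proof -
  have le: "phi h c d \<le> phi k c d" for c d
    unfolding phi_formula assms(1,2) using assms(3) by (smt (verit))
  have "BB h h \<le> BB h k"
    unfolding BB_phi by (intro integral_mono phi_int le)
  also have "BB h k = BB k h" by (rule BB_sym)
  also have "BB k h \<le> BB k k"
    unfolding BB_phi by (intro integral_mono phi_int le)
  finally show ?thesis unfolding tau_integral BB_def .
qed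

definition Rect :: "int \<Rightarrow> int \<Rightarrow> (nat \<times> nat) set" where
  "Rect x y = {(a, b). int a \<le> x \<and> int b \<le> y}"

lemma rect_incl_excl:
  assumes "finite_measure M" "sets M = UNIV"
  shows "measure M {(a, b)} = measure M (Rect (int a) (int b)) - measure M (Rect (int a - 1) (int b))
           - measure M (Rect (int a) (int b - 1)) + measure M (Rect (int a - 1) (int b - 1))"
proof -
  interpret finite_measure M by fact
  have fm: "X \<in> fmeasurable M" for X using assms(2) fmeasurable_eq_sets by auto
  have e1: "Rect (int a) (int b) = {(a, b)} \<union> (Rect (int a - 1) (int b) \<union> Rect (int a) (int b - 1))"
    by (auto simp: Rect_def)
  have e2: "Rect (int a - 1) (int b) \<inter> Rect (int a) (int b - 1) = Rect (int a - 1) (int b - 1)"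
    by (auto simp: Rect_def)
  have "measure M (Rect (int a) (int b)) = measure M {(a, b)} + measure M (Rect (int a - 1) (int b) \<union> Rect (int a) (int b - 1))"
    unfolding e1 by (rule finite_measure_Union) (auto simp: assms Rect_def)
  also have "measure M (Rect (int a - 1) (int b) \<union> Rect (int a) (int b - 1)) =
     measure M (Rect (int a - 1) (int b)) + measure M (Rect (int a) (int b - 1)) - measure M (Rect (int a - 1) (int b - 1))"
    by (subst measure_Un3) (auto simp: fm e2)
  finally show ?thesis by simp
qed

locale gmap =
  fixes g :: "real \<Rightarrow> nat \<times> nat"
  assumes gmeas: "\<And>x. {v \<in> {0<..<1}. g v = x} \<in> sets borel"
begin

definition "Om = {0<..<(1::real)}"
definition "MM = distr (restrict_space lborel Om) (count_space UNIV) g"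

lemma g_meas: "g \<in> measurable (restrict_space lborel Om) (count_space UNIV)"
proof (subst measurable_count_space_eq2_countable, intro conjI ballI)
  show "g \<in> space (restrict_space lborel Om) \<rightarrow> UNIV" by simp
  fix a
  have "g -` {a} \<inter> space (restrict_space lborel Om) = {v \<in> {0<..<1}. g v = a}"
    by (auto simp: Om_def space_restrict_space)
  then show "g -` {a} \<inter> space (restrict_space lborel Om) \<in> sets (restrict_space lborel Om)"
    using gmeas[of a] by (subst sets_restrict_space_iff) (auto simp: Om_def)
qed

lemma Om_sets: "Om \<in> sets lborel" unfolding Om_def by simp

lemma emeasure_MM: "emeasure MM S = emeasure lborel {v \<in> Om. g v \<in> S}"
proof -
  have "emeasure MM S = emeasure (restrict_space lborel Om) (g -` S \<inter> space (restrict_space lborel Om))"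
    unfolding MM_def by (rule emeasure_distr[OF g_meas]) simp
  also have "\<dots> = emeasure lborel (g -` S \<inter> Om)"
    by (subst emeasure_restrict_space) (auto simp: space_restrict_space Om_def)
  also have "g -` S \<inter> Om = {v \<in> Om. g v \<in> S}" by auto
  finally show ?thesis .
qed

lemma measure_MM: "measure MM S = measure lborel {v \<in> Om. g v \<in> S}"
  unfolding measure_def emeasure_MM ..

lemma sets_MM[simp]: "sets MM = UNIV"
  by (simp add: MM_def)

lemma prob_MM: "prob_space MM"
proof
  have sp: "space MM = UNIV" by (simp add: MM_def)
  have "emeasure MM (space MM) = emeasure lborel Om"
    unfolding sp emeasure_MM by simp
  also have "\<dots> = 1" unfolding Om_def by simp
  finally show "emeasure MM (space MM) = 1" .
qed

definition "CC x y = measure lborel {v \<in> Om. g v \<in> Rect x y}"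

lemma pmf_of_CC: "measure_pmf (pmf_of_joint_cdf CC) = MM"
proof -
  interpret prob_space MM by (rule prob_MM)
  define f where "f = (\<lambda>(a::nat, b::nat).
      CC (int a) (int b) - CC (int a - 1) (int b) - CC (int a) (int b - 1) + CC (int a - 1) (int b - 1))"
  have f_eq: "f x = measure MM {x}" for x
  proof -
    obtain a b where x: "x = (a, b)" by (metis prod.collapse)
    show ?thesis
      unfolding x f_def CC_def measure_MM[symmetric]
      by (subst rect_incl_excl[OF finite_measure_axioms]) simp_all
  qed
  have nn: "0 \<le> f x" for x unfolding f_eq by simp
  have "(\<integral>\<^sup>+x. ennreal (f x) \<partial>count_space UNIV) = (\<integral>\<^sup>+x. emeasure MM {x} \<partial>count_space UNIV)"
    unfolding f_eq by (simp add: emeasure_eq_measure)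
  also have "\<dots> = emeasure MM UNIV"
    by (rule emeasure_countable_singleton[symmetric]) auto
  also have "\<dots> = 1" using emeasure_space_1 by (simp add: MM_def)
  finally have one: "(\<integral>\<^sup>+x. ennreal (f x) \<partial>count_space UNIV) = 1" .
  have pe: "pmf_of_joint_cdf CC = embed_pmf f"
    unfolding pmf_of_joint_cdf_def f_def ..
  show ?thesis
  proof (rule measure_eqI_countable[where A=UNIV])
    fix x :: "nat \<times> nat"
    show "emeasure (measure_pmf (pmf_of_joint_cdf CC)) {x} = emeasure MM {x}"
      unfolding pe emeasure_pmf_single pmf_embed_pmf[OF nn one]
      by (simp add: f_eq emeasure_eq_measure)
  qed auto
qed

lemma pre_sets: "{v \<in> Om. g v \<in> S} \<in> sets borel"
proof -
  have "g -` S \<inter> space (restrict_space lborel Om) \<in> sets (restrict_space lborel Om)"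
    using g_meas by (rule measurable_sets) simp
  moreover have "g -` S \<inter> space (restrict_space lborel Om) = {v \<in> Om. g v \<in> S}"
    by (auto simp: space_restrict_space)
  ultimately show ?thesis
    by (subst (asm) sets_restrict_space_iff) (auto simp: Om_def)
qed

lemma prob_pmf_CC: "measure_pmf.prob (pmf_of_joint_cdf CC) S = measure lborel {v \<in> Om. g v \<in> S}"
  unfolding pmf_of_CC measure_MM ..

end


locale dcdf =
  fixes F :: "int \<Rightarrow> real"
  assumes neg: "\<And>s. s < 0 \<Longrightarrow> F s = 0"
    and mono: "\<And>s t. s \<le> t \<Longrightarrow> F s \<le> F t"
    and le1: "\<And>s. F s \<le> 1"
    and lim: "\<And>v. v < 1 \<Longrightarrow> \<exists>n::nat. v < F (int n)"
begin

lemma nonneg: "0 \<le> F s"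
  using mono[of "-1" s] neg[of "-1"] neg[of s] by (cases "s < 0") auto

definition inv :: "real \<Rightarrow> nat" where
  "inv v = (LEAST n. v \<le> F (int n))"

lemma galois:
  assumes "0 < v" "v < 1"
  shows "int (inv v) \<le> x \<longleftrightarrow> v \<le> F x"
proof -
  obtain n :: nat where n: "v < F (int n)" using lim assms by blast
  have inv1: "v \<le> F (int (inv v))"
    unfolding inv_def by (rule LeastI[of _ n]) (use n in auto)
  show ?thesis
  proof
    assume "int (inv v) \<le> x" then show "v \<le> F x" using inv1 mono by (meson order_trans)
  next
    assume h: "v \<le> F x"
    then have "x \<ge> 0" using neg[of x] assms by (cases "x < 0") auto
    then have "v \<le> F (int (nat x))" using h by simp
    then have "inv v \<le> nat x" unfolding inv_def by (rule Least_le)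
    then show "int (inv v) \<le> x" using \<open>x \<ge> 0\<close> by linarith
  qed
qed

lemma inv_eq:
  assumes "0 < v" "v < 1"
  shows "inv v = a \<longleftrightarrow> F (int a - 1) < v \<and> v \<le> F (int a)"
proof -
  have "inv v = a \<longleftrightarrow> int (inv v) \<le> int a \<and> \<not> int (inv v) \<le> int a - 1" by linarith
  then show ?thesis using galois[OF assms, of "int a"] galois[OF assms, of "int a - 1"] by auto
qed

lemma inv_simps:
  assumes "0 < v" "v < 1"
  shows "inv v = 0 \<longleftrightarrow> v \<le> F 0"
    "0 < inv v \<longleftrightarrow> F 0 < v"
    "int (inv v) = x \<longleftrightarrow> F (x - 1) < v \<and> v \<le> F x"
    "int (inv v) < x \<longleftrightarrow> v \<le> F (x - 1)"
    "x < int (inv v) \<longleftrightarrow> F x < v"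
    "int (inv v) \<le> x \<longleftrightarrow> v \<le> F x"
  using galois[OF assms, of 0] galois[OF assms, of x] galois[OF assms, of "x - 1"]
  by auto

lemma inv_mono:
  assumes "0 < v" "v < 1" "0 < w" "w < 1" "v \<le> w"
  shows "inv v \<le> inv w"
proof -
  have "w \<le> F (int (inv w))" using galois[OF assms(3,4), of "int (inv w)"] by simp
  then have "v \<le> F (int (inv w))" using assms by simp
  then show ?thesis using galois[OF assms(1,2), of "int (inv w)"] by simp
qed

end

lemma leb_gen:
  fixes c d :: real
  assumes "0 \<le> c" "d \<le> 1" "\<And>v. 0 < v \<Longrightarrow> v < 1 \<Longrightarrow> c < v \<Longrightarrow> v < d \<Longrightarrow> v \<in> X"
    "\<And>v. v \<in> X \<Longrightarrow> c \<le> v \<and> v \<le> d" "X \<in> sets borel"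
  shows "measure lborel X = max 0 (d - c)"
proof (cases "c \<le> d")
  case False
  then have e: "X = {}" using assms(4) by force
  show ?thesis unfolding e using False by simp
next
  case True
  have "emeasure lborel {c<..<d} \<le> emeasure lborel X"
    by (rule emeasure_mono) (use assms in auto)
  moreover have "emeasure lborel X \<le> emeasure lborel {c..d}"
    by (rule emeasure_mono) (use assms in auto)
  ultimately have "emeasure lborel X = ennreal (d - c)"
    using True by (intro antisym) auto
  then show ?thesis using True by (simp add: measure_def)
qed

lemma leb_interval:
  fixes c d :: real
  assumes "0 \<le> c" "d \<le> 1"
  shows "measure lborel {v. 0 < v \<and> v < 1 \<and> c \<le> v \<and> v \<le> d} = max 0 (d - c)"
proof (cases "c \<le> d")
  case False
  then have e: "{v. 0 < v \<and> v < 1 \<and> c \<le> v \<and> v \<le> d} = {}" by auto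
  show ?thesis unfolding e using False by simp
next
  case True
  let ?S = "{v. 0 < v \<and> v < 1 \<and> c \<le> v \<and> v \<le> d}"
  have S: "?S \<in> sets borel" by measurable
  have "emeasure lborel {c<..<d} \<le> emeasure lborel ?S"
    by (rule emeasure_mono) (use S assms in auto)
  moreover have "emeasure lborel ?S \<le> emeasure lborel {c..d}"
    by (rule emeasure_mono) auto
  ultimately have "emeasure lborel ?S = ennreal (d - c)"
    using True by (intro antisym) auto
  then show ?thesis using True by (simp add: measure_def)
qed


locale two = F: dcdf F + G: dcdf G for F G
begin

definition "gU v = (F.inv v, G.inv v)"
definition "gL v = (F.inv v, G.inv (1 - v))"

lemma gU_pre: "{v \<in> {0<..<1}. gU v = (a, b)} =
   {v. 0 < v \<and> v < 1 \<and> F (int a - 1) < v \<and> v \<le> F (int a) \<and> G (int b - 1) < v \<and> v \<le> G (int b)}"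
  using F.inv_eq G.inv_eq by (auto simp: gU_def)

lemma gL_pre: "{v \<in> {0<..<1}. gL v = (a, b)} =
   {v. 0 < v \<and> v < 1 \<and> F (int a - 1) < v \<and> v \<le> F (int a) \<and> G (int b - 1) < 1 - v \<and> 1 - v \<le> G (int b)}"
proof -
  have "0 < v \<Longrightarrow> v < 1 \<Longrightarrow> G.inv (1 - v) = b \<longleftrightarrow> G (int b - 1) < 1 - v \<and> 1 - v \<le> G (int b)" for v
    using G.inv_eq[of "1 - v" b] by simp
  then show ?thesis using F.inv_eq by (auto simp: gL_def)
qed

sublocale U: gmap gU
proof
  fix x :: "nat \<times> nat"
  obtain a b where x: "x = (a, b)" by (metis prod.collapse)
  show "{v \<in> {0<..<1}. gU v = x} \<in> sets borel" unfolding x gU_pre by measurable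
qed

sublocale L: gmap gL
proof
  fix x :: "nat \<times> nat"
  obtain a b where x: "x = (a, b)" by (metis prod.collapse)
  show "{v \<in> {0<..<1}. gL v = x} \<in> sets borel" unfolding x gL_pre by measurable
qed

lemma CC_U: "U.CC = (\<lambda>x y. min (F x) (G y))"
proof (intro ext)
  fix x y
  have "{v \<in> U.Om. gU v \<in> Rect x y} = {v. 0 < v \<and> v < 1 \<and> 0 \<le> v \<and> v \<le> min (F x) (G y)}"
    using F.galois G.galois by (auto simp: U.Om_def gU_def Rect_def)
  then show "U.CC x y = min (F x) (G y)"
    unfolding U.CC_def using leb_interval[of 0 "min (F x) (G y)"] F.le1 F.nonneg G.nonneg
    by (simp add: min_le_iff_disj)
qed

lemma CC_L: "L.CC = (\<lambda>x y. max (F x + G y - 1) 0)"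
proof (intro ext)
  fix x y
  have "{v \<in> L.Om. gL v \<in> Rect x y} = {v. 0 < v \<and> v < 1 \<and> 1 - G y \<le> v \<and> v \<le> F x}"
  proof -
    have "0 < v \<Longrightarrow> v < 1 \<Longrightarrow> int (G.inv (1 - v)) \<le> y \<longleftrightarrow> 1 - v \<le> G y" for v
      using G.galois[of "1 - v" y] by simp
    then show ?thesis using F.galois by (auto simp: L.Om_def gL_def Rect_def)
  qed
  then show "L.CC x y = max (F x + G y - 1) 0"
    unfolding L.CC_def using leb_interval[of "1 - G y" "F x"] F.le1 G.le1
    by (simp add: max.commute)
qed

definition "UU = FH_upper F G"
definition "LL = FH_lower F G"

lemma probU: "measure_pmf.prob UU S = measure lborel {v \<in> U.Om. gU v \<in> S}"
  unfolding UU_def FH_upper_def CC_U[symmetric] by (rule U.prob_pmf_CC)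

lemma probL: "measure_pmf.prob LL S = measure lborel {v \<in> L.Om. gL v \<in> S}"
  unfolding LL_def FH_lower_def CC_L[symmetric] by (rule L.prob_pmf_CC)

lemma joint_U: "joint_cdf UU x y = min (F x) (G y)"
  using probU[of "Rect x y"] CC_U unfolding U.CC_def joint_cdf_def Rect_def
  by (metis (no_types, lifting))

lemma joint_L: "joint_cdf LL x y = max (F x + G y - 1) 0"
  using probL[of "Rect x y"] CC_L unfolding L.CC_def joint_cdf_def Rect_def
  by (metis (no_types, lifting))

lemma mF_U: "mF UU s = F s"
proof -
  have "{v \<in> U.Om. gU v \<in> {(a, b). int a \<le> s}} = {v. 0 < v \<and> v < 1 \<and> 0 \<le> v \<and> v \<le> F s}"
    using F.galois by (auto simp: U.Om_def gU_def)
  then show ?thesis unfolding mF_def probU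
    using leb_interval[of 0 "F s"] F.le1 F.nonneg by simp
qed

lemma mG_U: "mG UU s = G s"
proof -
  have "{v \<in> U.Om. gU v \<in> {(a, b). int b \<le> s}} = {v. 0 < v \<and> v < 1 \<and> 0 \<le> v \<and> v \<le> G s}"
    using G.galois by (auto simp: U.Om_def gU_def)
  then show ?thesis unfolding mG_def probU
    using leb_interval[of 0 "G s"] G.le1 G.nonneg by simp
qed

lemma mF_L: "mF LL s = F s"
proof -
  have "{v \<in> L.Om. gL v \<in> {(a, b). int a \<le> s}} = {v. 0 < v \<and> v < 1 \<and> 0 \<le> v \<and> v \<le> F s}"
    using F.galois by (auto simp: L.Om_def gL_def)
  then show ?thesis unfolding mF_def probL
    using leb_interval[of 0 "F s"] F.le1 F.nonneg by simp
qed

lemma mG_L: "mG LL s = G s"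
proof -
  have "0 < v \<Longrightarrow> v < 1 \<Longrightarrow> int (G.inv (1 - v)) \<le> s \<longleftrightarrow> 1 - v \<le> G s" for v
    using G.galois[of "1 - v" s] by simp
  then have "{v \<in> L.Om. gL v \<in> {(a, b). int b \<le> s}} = {v. 0 < v \<and> v < 1 \<and> 1 - G s \<le> v \<and> v \<le> 1}"
    by (auto simp: L.Om_def gL_def)
  then show ?thesis unfolding mG_def probL
    using leb_interval[of "1 - G s" 1] G.le1 G.nonneg by simp
qed

lemma UU_coupling: "UU \<in> couplings F G"
  using mF_U mG_U unfolding couplings_def mF_def mG_def by auto

lemma LL_coupling: "LL \<in> couplings F G"
  using mF_L mG_L unfolding couplings_def mF_def mG_def by auto

lemma coupling_bounds:
  assumes "H \<in> couplings F G"
  shows "joint_cdf H x y \<le> min (F x) (G y)" "max (F x + G y - 1) 0 \<le> joint_cdf H x y"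
proof -
  have mf: "measure_pmf.prob H {(a, b). int a \<le> x} = F x" and mg: "measure_pmf.prob H {(a, b). int b \<le> y} = G y"
    using assms unfolding couplings_def by auto
  have "joint_cdf H x y \<le> measure_pmf.prob H {(a, b). int a \<le> x}"
    unfolding joint_cdf_def by (rule measure_pmf.finite_measure_mono) auto
  moreover have "joint_cdf H x y \<le> measure_pmf.prob H {(a, b). int b \<le> y}"
    unfolding joint_cdf_def by (rule measure_pmf.finite_measure_mono) auto
  ultimately show "joint_cdf H x y \<le> min (F x) (G y)" using mf mg by simp
  have "measure_pmf.prob H ({(a, b). int a \<le> x} \<union> {(a, b). int b \<le> y}) =
        measure_pmf.prob H {(a, b). int a \<le> x} + measure_pmf.prob H {(a, b). int b \<le> y} - joint_cdf H x y"
    unfolding joint_cdf_def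
    by (subst measure_Un3) (auto simp: measure_pmf.emeasure_eq_measure fmeasurable_def Int_def case_prod_beta intro!: arg_cong[where f="measure_pmf.prob H"])
  moreover have "measure_pmf.prob H ({(a, b). int a \<le> x} \<union> {(a, b). int b \<le> y}) \<le> 1"
    by simp
  ultimately show "max (F x + G y - 1) 0 \<le> joint_cdf H x y" using mf mg
    by (simp add: joint_cdf_def)
qed

lemma sup_U: "(SUP H\<in>couplings F G. kendall_tau H) = kendall_tau UU"
proof (rule cSup_eq_maximum)
  show "kendall_tau UU \<in> kendall_tau ` couplings F G" using UU_coupling by blast
  fix t assume "t \<in> kendall_tau ` couplings F G"
  then obtain H where H: "H \<in> couplings F G" "t = kendall_tau H" by blast
  show "t \<le> kendall_tau UU" unfolding H(2)
    by (rule tau_mono) (use H(1) mF_U mG_U coupling_bounds joint_U in \<open>auto simp: couplings_def mF_def mG_def\<close>)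
qed

lemma inf_L: "(INF H\<in>couplings F G. kendall_tau H) = kendall_tau LL"
proof (rule cInf_eq_minimum)
  show "kendall_tau LL \<in> kendall_tau ` couplings F G" using LL_coupling by blast
  fix t assume "t \<in> kendall_tau ` couplings F G"
  then obtain H where H: "H \<in> couplings F G" "t = kendall_tau H" by blast
  show "kendall_tau LL \<le> t" unfolding H(2)
    by (rule tau_mono) (use H(1) mF_L mG_L coupling_bounds joint_L in \<open>auto simp: couplings_def mF_def mG_def\<close>)
qed


lemma pU_eval:
  assumes "0 \<le> c" "d \<le> 1" "\<And>v. 0 < v \<Longrightarrow> v < 1 \<Longrightarrow> c < v \<Longrightarrow> v < d \<Longrightarrow> gU v \<in> S"
    "\<And>v. 0 < v \<Longrightarrow> v < 1 \<Longrightarrow> gU v \<in> S \<Longrightarrow> c \<le> v \<and> v \<le> d"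
  shows "measure_pmf.prob UU S = max 0 (d - c)"
  unfolding probU by (rule leb_gen) (use assms U.pre_sets in \<open>auto simp: U.Om_def\<close>)

lemma pL_eval:
  assumes "0 \<le> c" "d \<le> 1" "\<And>v. 0 < v \<Longrightarrow> v < 1 \<Longrightarrow> c < v \<Longrightarrow> v < d \<Longrightarrow> gL v \<in> S"
    "\<And>v. 0 < v \<Longrightarrow> v < 1 \<Longrightarrow> gL v \<in> S \<Longrightarrow> c \<le> v \<and> v \<le> d"
  shows "measure_pmf.prob LL S = max 0 (d - c)"
  unfolding probL by (rule leb_gen) (use assms L.pre_sets in \<open>auto simp: L.Om_def\<close>)

lemma setU: "x \<in> set_pmf UU \<Longrightarrow> \<exists>v. 0 < v \<and> v < 1 \<and> gU v = x"
proof -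
  assume "x \<in> set_pmf UU"
  then have "measure_pmf.prob UU {x} \<noteq> 0" by (simp add: measure_pmf_single pmf_eq_0_set_pmf)
  then have "{v \<in> U.Om. gU v \<in> {x}} \<noteq> {}" unfolding probU by (metis measure_empty)
  then show ?thesis by (auto simp: U.Om_def)
qed

lemma setL: "x \<in> set_pmf LL \<Longrightarrow> \<exists>v. 0 < v \<and> v < 1 \<and> gL v = x"
proof -
  assume "x \<in> set_pmf LL"
  then have "measure_pmf.prob LL {x} \<noteq> 0" by (simp add: measure_pmf_single pmf_eq_0_set_pmf)
  then have "{v \<in> L.Om. gL v \<in> {x}} \<noteq> {}" unfolding probL by (metis measure_empty)
  then show ?thesis by (auto simp: L.Om_def)
qed

lemma U_no_disc:
  "measure_pmf.prob (pair_pmf UU UU) {((x1, y1), (x2, y2)). (int x1 - int x2) * (int y1 - int y2) < 0} = 0"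
proof -
  have "set_pmf (pair_pmf UU UU) \<inter> {((x1, y1), (x2, y2)). (int x1 - int x2) * (int y1 - int y2) < 0} = {}"
  proof (safe)
    fix x1 y1 x2 y2
    assume "((x1, y1), (x2, y2)) \<in> set_pmf (pair_pmf UU UU)" and neg: "(int x1 - int x2) * (int y1 - int y2) < 0"
    then have m: "(x1, y1) \<in> set_pmf UU" "(x2, y2) \<in> set_pmf UU" by auto
    obtain v where v: "0 < v" "v < 1" "gU v = (x1, y1)" using setU[OF m(1)] by blast
    obtain w where w: "0 < w" "w < 1" "gU w = (x2, y2)" using setU[OF m(2)] by blast
    show "((x1, y1), (x2, y2)) \<in> {}"
    proof (cases "v \<le> w")
      case True
      then have "x1 \<le> x2" "y1 \<le> y2" using F.inv_mono[OF v(1,2) w(1,2) True] G.inv_mono[OF v(1,2) w(1,2) True] v(3) w(3)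
        by (simp_all add: gU_def)
      then have "0 \<le> (int x1 - int x2) * (int y1 - int y2)" by (intro mult_nonpos_nonpos) auto
      then show ?thesis using neg by simp
    next
      case False
      then have wv: "w \<le> v" by simp
      have "x2 \<le> x1" "y2 \<le> y1" using F.inv_mono[OF w(1,2) v(1,2) wv] G.inv_mono[OF w(1,2) v(1,2) wv] v(3) w(3)
        by (simp_all add: gU_def)
      then have "0 \<le> (int x1 - int x2) * (int y1 - int y2)" by (intro mult_nonneg_nonneg) auto
      then show ?thesis using neg by simp
    qed
  qed
  then show ?thesis by (simp add: measure_pmf_zero_iff)
qed

lemma L_no_conc:
  "measure_pmf.prob (pair_pmf LL LL) {((x1, y1), (x2, y2)). (int x1 - int x2) * (int y1 - int y2) > 0} = 0"
proof -
  have "set_pmf (pair_pmf LL LL) \<inter> {((x1, y1), (x2, y2)). (int x1 - int x2) * (int y1 - int y2) > 0} = {}"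
  proof (safe)
    fix x1 y1 x2 y2
    assume "((x1, y1), (x2, y2)) \<in> set_pmf (pair_pmf LL LL)" and pos: "(int x1 - int x2) * (int y1 - int y2) > 0"
    then have m: "(x1, y1) \<in> set_pmf LL" "(x2, y2) \<in> set_pmf LL" by auto
    obtain v where v: "0 < v" "v < 1" "gL v = (x1, y1)" using setL[OF m(1)] by blast
    obtain w where w: "0 < w" "w < 1" "gL w = (x2, y2)" using setL[OF m(2)] by blast
    show "((x1, y1), (x2, y2)) \<in> {}"
    proof (cases "v \<le> w")
      case True
      have "1 - w \<le> 1 - v" using True by simp
      then have "x1 \<le> x2" "y2 \<le> y1" using F.inv_mono[OF v(1,2) w(1,2) True] G.inv_mono[of "1 - w" "1 - v"] v w
        by (simp_all add: gL_def)
      then have "(int x1 - int x2) * (int y1 - int y2) \<le> 0" by (intro mult_nonpos_nonneg) auto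
      then show ?thesis using pos by simp
    next
      case False
      then have wv: "w \<le> v" by simp
      have "1 - v \<le> 1 - w" using wv by simp
      then have "x2 \<le> x1" "y1 \<le> y2" using F.inv_mono[OF w(1,2) v(1,2) wv] G.inv_mono[of "1 - v" "1 - w"] v w
        by (simp_all add: gL_def)
      then have "(int x1 - int x2) * (int y1 - int y2) \<le> 0" by (intro mult_nonneg_nonpos) auto
      then show ?thesis using pos by simp
    qed
  qed
  then show ?thesis by (simp add: measure_pmf_zero_iff)
qed

end



lemma split3:
  assumes "A \<union> B \<union> C = UNIV" "A \<inter> B = {}" "A \<inter> C = {}" "B \<inter> C = {}"
  shows "measure_pmf.prob P X = measure_pmf.prob P (X \<inter> A) + measure_pmf.prob P (X \<inter> B) + measure_pmf.prob P (X \<inter> C)"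
proof -
  have "X = (X \<inter> A) \<union> (X \<inter> B) \<union> (X \<inter> C)" using assms(1) by auto
  then have "measure_pmf.prob P X = measure_pmf.prob P ((X \<inter> A) \<union> (X \<inter> B) \<union> (X \<inter> C))" by simp
  also have "\<dots> = measure_pmf.prob P ((X \<inter> A) \<union> (X \<inter> B)) + measure_pmf.prob P (X \<inter> C)"
    by (rule measure_pmf.finite_measure_Union) (use assms in auto)
  also have "measure_pmf.prob P ((X \<inter> A) \<union> (X \<inter> B)) = measure_pmf.prob P (X \<inter> A) + measure_pmf.prob P (X \<inter> B)"
    by (rule measure_pmf.finite_measure_Union) (use assms in auto)
  finally show ?thesis .
qed

lemma null_fst:
  assumes "measure_pmf.prob p A = 0" "X \<subseteq> A \<times> UNIV"
  shows "measure_pmf.prob (pair_pmf p q) X = 0"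
proof -
  have "measure_pmf.prob (pair_pmf p q) X \<le> measure_pmf.prob (pair_pmf p q) (A \<times> UNIV)"
    using assms(2) by (rule measure_pmf.finite_measure_mono) simp
  also have "\<dots> = 0" by (simp add: prob_pair_times assms(1))
  finally show ?thesis by (simp add: order_antisym)
qed

lemma null_snd:
  assumes "measure_pmf.prob q A = 0" "X \<subseteq> UNIV \<times> A"
  shows "measure_pmf.prob (pair_pmf p q) X = 0"
proof -
  have "measure_pmf.prob (pair_pmf p q) X \<le> measure_pmf.prob (pair_pmf p q) (UNIV \<times> A)"
    using assms(2) by (rule measure_pmf.finite_measure_mono) simp
  also have "\<dots> = 0" by (simp add: prob_pair_times assms(1))
  finally show ?thesis by (simp add: order_antisym)
qed

lemma sandwich:
  assumes "E \<subseteq> X" "X \<subseteq> E \<union> Na \<union> Nb" "measure_pmf.prob P Na = 0" "measure_pmf.prob P Nb = 0"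
  shows "measure_pmf.prob P X = measure_pmf.prob P E"
proof (rule antisym)
  show "measure_pmf.prob P E \<le> measure_pmf.prob P X"
    using assms(1) by (rule measure_pmf.finite_measure_mono) simp
  have "measure_pmf.prob P X \<le> measure_pmf.prob P (E \<union> Na \<union> Nb)"
    using assms(2) by (rule measure_pmf.finite_measure_mono) simp
  also have "\<dots> \<le> measure_pmf.prob P (E \<union> Na) + measure_pmf.prob P Nb"
    by (rule measure_Un_le) auto
  also have "measure_pmf.prob P (E \<union> Na) \<le> measure_pmf.prob P E + measure_pmf.prob P Na"
    by (rule measure_Un_le) auto
  finally show "measure_pmf.prob P X \<le> measure_pmf.prob P E" using assms(3,4) by simp
qed

definition "Co = {((x1, y1), (x2, y2)). (int x1 - int x2) * (int y1 - int y2) > (0::int)}"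
definition "Di = {((x1, y1), (x2, y2)). (int x1 - int x2) * (int y1 - int y2) < (0::int)}"
definition "Ti = {((x1::nat, y1::nat), (x2::nat, y2::nat)). x1 = x2 \<or> y1 = y2}"

lemma tau_CoDi: "kendall_tau H = measure_pmf.prob (pair_pmf H H) Co - measure_pmf.prob (pair_pmf H H) Di"
  unfolding kendall_tau_def Co_def Di_def ..

lemma CoDiTi: "measure_pmf.prob P Co + measure_pmf.prob P Di + measure_pmf.prob P Ti = 1"
proof -
  have "measure_pmf.prob P (Co \<union> Di \<union> Ti) = 1"
  proof -
    have "Co \<union> Di \<union> Ti = UNIV"
      by (auto simp: Co_def Di_def Ti_def)
    then show ?thesis by simp
  qed
  moreover have "measure_pmf.prob P (Co \<union> Di \<union> Ti) = measure_pmf.prob P Co + measure_pmf.prob P Di + measure_pmf.prob P Ti"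
  proof -
    have "measure_pmf.prob P (Co \<union> Di \<union> Ti) = measure_pmf.prob P (Co \<union> Di) + measure_pmf.prob P Ti"
      by (rule measure_pmf.finite_measure_Union) (auto simp: Co_def Di_def Ti_def)
    moreover have "measure_pmf.prob P (Co \<union> Di) = measure_pmf.prob P Co + measure_pmf.prob P Di"
      by (rule measure_pmf.finite_measure_Union) (auto simp: Co_def Di_def)
    ultimately show ?thesis by simp
  qed
  ultimately show ?thesis by simp
qed

lemma tie11_eq: "tie_prob_11 H = measure_pmf.prob (pair_pmf (cond_pmf H {(a, b). 0 < a \<and> 0 < b}) (cond_pmf H {(a, b). 0 < a \<and> 0 < b})) Ti"
  unfolding tie_prob_11_def Ti_def Let_def ..


context two
begin

lemma tau_U1:
  assumes h: "F 0 \<le> G 0" "G 0 < F s" "F (s - 1) \<le> G 0"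
  shows "kendall_tau UU = (1 - (G 0)^2) - (1 - G 0)^2 * tie_prob_11 UU - 2 * (G 0 - F (s - 1)) * (F s - G 0)"
proof -
  let ?P = "pair_pmf UU UU"
  define Z where "Z = {(a::nat, b::nat). b = 0}"
  define W where "W = {(a::nat, b::nat). 0 < a \<and> 0 < b}"
  define N where "N = {(a::nat, b::nat). a = 0 \<and> 0 < b}"
  define E1 where "E1 = {(a::nat, b::nat). int a = s \<and> b = 0}"
  define E2 where "E2 = {(a::nat, b::nat). int a = s \<and> 0 < b}"
  define Z1 where "Z1 = {(a::nat, b::nat). b = 0 \<and> s < int a}"
  define W1 where "W1 = {(a::nat, b::nat). 0 < b \<and> int a < s}"
  have part: "Z \<union> W \<union> N = UNIV" "Z \<inter> W = {}" "Z \<inter> N = {}" "W \<inter> N = {}"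
    by (auto simp: Z_def W_def N_def)
  have s_pos: "0 < s"
  proof (rule ccontr)
    assume "\<not> 0 < s" then have "F s \<le> F 0" using F.mono[of s 0] by simp
    then show False using h by simp
  qed
  have Fs1: "0 \<le> F (s - 1)" "F s \<le> 1" "0 \<le> G 0" "G 0 \<le> 1" using F.nonneg F.le1 G.nonneg G.le1 by auto
  note simps = gU_def F.inv_simps G.inv_simps Z_def W_def N_def E1_def E2_def Z1_def W1_def
  have pZ: "measure_pmf.prob UU Z = G 0"
  proof -
    have "measure_pmf.prob UU Z = max 0 (G 0 - 0)"
      by (rule pU_eval) (use Fs1 in \<open>auto simp: simps\<close>)
    then show ?thesis using Fs1 by simp
  qed
  have pW: "measure_pmf.prob UU W = 1 - G 0"
  proof -
    have "measure_pmf.prob UU W = max 0 (1 - G 0)"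
      by (rule pU_eval) (use Fs1 h in \<open>auto simp: simps\<close>)
    then show ?thesis using Fs1 by simp
  qed
  have pN: "measure_pmf.prob UU N = 0"
  proof -
    have "measure_pmf.prob UU N = max 0 (0 - 0)"
      by (rule pU_eval) (use Fs1 h in \<open>auto simp: simps\<close>)
    then show ?thesis by simp
  qed
  have pE1: "measure_pmf.prob UU E1 = G 0 - F (s - 1)"
  proof -
    have "measure_pmf.prob UU E1 = max 0 (G 0 - F (s - 1))"
      by (rule pU_eval) (use Fs1 h in \<open>auto simp: simps\<close>)
    then show ?thesis using h by simp
  qed
  have pE2: "measure_pmf.prob UU E2 = F s - G 0"
  proof -
    have "measure_pmf.prob UU E2 = max 0 (F s - G 0)"
      by (rule pU_eval) (use Fs1 h in \<open>auto simp: simps\<close>)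
    then show ?thesis using h by simp
  qed
  have pZ1: "measure_pmf.prob UU Z1 = 0"
  proof -
    have "measure_pmf.prob UU Z1 = max 0 (0 - 0)"
      by (rule pU_eval) (use Fs1 h in \<open>auto simp: simps\<close>)
    then show ?thesis by simp
  qed
  have pW1: "measure_pmf.prob UU W1 = 0"
  proof -
    have "measure_pmf.prob UU W1 = max 0 (0 - 0)"
      by (rule pU_eval) (use Fs1 h in \<open>auto simp: simps\<close>)
    then show ?thesis by simp
  qed
  have s1: "measure_pmf.prob ?P X = measure_pmf.prob ?P (X \<inter> Z \<times> UNIV) + measure_pmf.prob ?P (X \<inter> W \<times> UNIV)
      + measure_pmf.prob ?P (X \<inter> N \<times> UNIV)" for X
    by (rule split3) (use part in auto)
  have s2: "measure_pmf.prob ?P X = measure_pmf.prob ?P (X \<inter> UNIV \<times> Z) + measure_pmf.prob ?P (X \<inter> UNIV \<times> W)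
      + measure_pmf.prob ?P (X \<inter> UNIV \<times> N)" for X
    by (rule split3) (use part in auto)
  have tZZ: "measure_pmf.prob ?P (Ti \<inter> Z \<times> UNIV \<inter> UNIV \<times> Z) = G 0 * G 0"
  proof -
    have "Ti \<inter> Z \<times> UNIV \<inter> UNIV \<times> Z = Z \<times> Z" by (auto simp: Ti_def Z_def)
    then show ?thesis by (simp add: prob_pair_times pZ)
  qed
  have tZW: "measure_pmf.prob ?P (Ti \<inter> Z \<times> UNIV \<inter> UNIV \<times> W) = (G 0 - F (s - 1)) * (F s - G 0)"
  proof -
    have "measure_pmf.prob ?P (Ti \<inter> Z \<times> UNIV \<inter> UNIV \<times> W) = measure_pmf.prob ?P (E1 \<times> E2)"
    proof (rule sandwich[where Na="Z1 \<times> UNIV" and Nb="UNIV \<times> W1"])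
      show "E1 \<times> E2 \<subseteq> Ti \<inter> Z \<times> UNIV \<inter> UNIV \<times> W" using s_pos by (auto simp: Ti_def simps)
      show "Ti \<inter> Z \<times> UNIV \<inter> UNIV \<times> W \<subseteq> E1 \<times> E2 \<union> Z1 \<times> UNIV \<union> UNIV \<times> W1"
        by (auto simp: Ti_def simps)
      show "measure_pmf.prob ?P (Z1 \<times> UNIV) = 0" by (rule null_fst[OF pZ1]) auto
      show "measure_pmf.prob ?P (UNIV \<times> W1) = 0" by (rule null_snd[OF pW1]) auto
    qed
    then show ?thesis by (simp add: prob_pair_times pE1 pE2)
  qed
  have tWZ: "measure_pmf.prob ?P (Ti \<inter> W \<times> UNIV \<inter> UNIV \<times> Z) = (F s - G 0) * (G 0 - F (s - 1))"
  proof -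
    have "measure_pmf.prob ?P (Ti \<inter> W \<times> UNIV \<inter> UNIV \<times> Z) = measure_pmf.prob ?P (E2 \<times> E1)"
    proof (rule sandwich[where Na="W1 \<times> UNIV" and Nb="UNIV \<times> Z1"])
      show "E2 \<times> E1 \<subseteq> Ti \<inter> W \<times> UNIV \<inter> UNIV \<times> Z" using s_pos by (auto simp: Ti_def simps)
      show "Ti \<inter> W \<times> UNIV \<inter> UNIV \<times> Z \<subseteq> E2 \<times> E1 \<union> W1 \<times> UNIV \<union> UNIV \<times> Z1"
        by (auto simp: Ti_def simps)
      show "measure_pmf.prob ?P (W1 \<times> UNIV) = 0" by (rule null_fst[OF pW1]) auto
      show "measure_pmf.prob ?P (UNIV \<times> Z1) = 0" by (rule null_snd[OF pZ1]) auto
    qed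
    then show ?thesis by (simp add: prob_pair_times pE1 pE2)
  qed
  have tWW: "measure_pmf.prob ?P (Ti \<inter> W \<times> UNIV \<inter> UNIV \<times> W) = tie_prob_11 UU * (1 - G 0)^2"
  proof -
    have "Ti \<inter> W \<times> UNIV \<inter> UNIV \<times> W = Ti \<inter> W \<times> W" by auto
    moreover have "measure_pmf.prob UU W > 0" using pW h Fs1 by simp
    ultimately show ?thesis
      using tie_cond[of UU W Ti] unfolding tie11_eq W_def pW[unfolded W_def] by simp
  qed
  have n1: "measure_pmf.prob ?P (Ti \<inter> Z \<times> UNIV \<inter> UNIV \<times> N) = 0"
    by (rule null_snd[OF pN]) auto
  have n2: "measure_pmf.prob ?P (Ti \<inter> W \<times> UNIV \<inter> UNIV \<times> N) = 0"
    by (rule null_snd[OF pN]) auto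
  have n3: "measure_pmf.prob ?P (Ti \<inter> N \<times> UNIV) = 0"
    by (rule null_fst[OF pN]) auto
  note nulls = n1 n2 n3
  have PT: "measure_pmf.prob ?P Ti = G 0 * G 0 + 2 * ((G 0 - F (s - 1)) * (F s - G 0)) + tie_prob_11 UU * (1 - G 0)^2"
    using s1[of Ti] s2[of "Ti \<inter> Z \<times> UNIV"] s2[of "Ti \<inter> W \<times> UNIV"] tZZ tZW tWZ tWW nulls
    by (simp add: algebra_simps)
  have "kendall_tau UU = 1 - measure_pmf.prob ?P Ti"
    using tau_CoDi[of UU] CoDiTi[of ?P] U_no_disc unfolding Di_def by simp
  then show ?thesis unfolding PT by (simp add: power2_eq_square algebra_simps)
qed

lemma tau_U2:
  assumes h: "G 0 \<le> F 0" "F 0 < G s" "G (s - 1) \<le> F 0"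
  shows "kendall_tau UU = (1 - (F 0)^2) - (1 - F 0)^2 * tie_prob_11 UU - 2 * (F 0 - G (s - 1)) * (G s - F 0)"
proof -
  let ?P = "pair_pmf UU UU"
  define Z where "Z = {(a::nat, b::nat). a = 0}"
  define W where "W = {(a::nat, b::nat). 0 < a \<and> 0 < b}"
  define N where "N = {(a::nat, b::nat). b = 0 \<and> 0 < a}"
  define E1 where "E1 = {(a::nat, b::nat). int b = s \<and> a = 0}"
  define E2 where "E2 = {(a::nat, b::nat). int b = s \<and> 0 < a}"
  define Z1 where "Z1 = {(a::nat, b::nat). a = 0 \<and> s < int b}"
  define W1 where "W1 = {(a::nat, b::nat). 0 < a \<and> int b < s}"
  have part: "Z \<union> W \<union> N = UNIV" "Z \<inter> W = {}" "Z \<inter> N = {}" "W \<inter> N = {}"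
    by (auto simp: Z_def W_def N_def)
  have s_pos: "0 < s"
  proof (rule ccontr)
    assume "\<not> 0 < s" then have "G s \<le> G 0" using G.mono[of s 0] by simp
    then show False using h by simp
  qed
  have Fs1: "0 \<le> G (s - 1)" "G s \<le> 1" "0 \<le> F 0" "F 0 \<le> 1" using F.nonneg F.le1 G.nonneg G.le1 by auto
  note simps = gU_def F.inv_simps G.inv_simps Z_def W_def N_def E1_def E2_def Z1_def W1_def
  have pZ: "measure_pmf.prob UU Z = F 0"
  proof -
    have "measure_pmf.prob UU Z = max 0 (F 0 - 0)"
      by (rule pU_eval) (use Fs1 in \<open>auto simp: simps\<close>)
    then show ?thesis using Fs1 by simp
  qed
  have pW: "measure_pmf.prob UU W = 1 - F 0"
  proof -
    have "measure_pmf.prob UU W = max 0 (1 - F 0)"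
      by (rule pU_eval) (use Fs1 h in \<open>auto simp: simps\<close>)
    then show ?thesis using Fs1 by simp
  qed
  have pN: "measure_pmf.prob UU N = 0"
  proof -
    have "measure_pmf.prob UU N = max 0 (0 - 0)"
      by (rule pU_eval) (use Fs1 h in \<open>auto simp: simps\<close>)
    then show ?thesis by simp
  qed
  have pE1: "measure_pmf.prob UU E1 = F 0 - G (s - 1)"
  proof -
    have "measure_pmf.prob UU E1 = max 0 (F 0 - G (s - 1))"
      by (rule pU_eval) (use Fs1 h in \<open>auto simp: simps\<close>)
    then show ?thesis using h by simp
  qed
  have pE2: "measure_pmf.prob UU E2 = G s - F 0"
  proof -
    have "measure_pmf.prob UU E2 = max 0 (G s - F 0)"
      by (rule pU_eval) (use Fs1 h in \<open>auto simp: simps\<close>)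
    then show ?thesis using h by simp
  qed
  have pZ1: "measure_pmf.prob UU Z1 = 0"
  proof -
    have "measure_pmf.prob UU Z1 = max 0 (0 - 0)"
      by (rule pU_eval) (use Fs1 h in \<open>auto simp: simps\<close>)
    then show ?thesis by simp
  qed
  have pW1: "measure_pmf.prob UU W1 = 0"
  proof -
    have "measure_pmf.prob UU W1 = max 0 (0 - 0)"
      by (rule pU_eval) (use Fs1 h in \<open>auto simp: simps\<close>)
    then show ?thesis by simp
  qed
  have s1: "measure_pmf.prob ?P X = measure_pmf.prob ?P (X \<inter> Z \<times> UNIV) + measure_pmf.prob ?P (X \<inter> W \<times> UNIV)
      + measure_pmf.prob ?P (X \<inter> N \<times> UNIV)" for X
    by (rule split3) (use part in auto)
  have s2: "measure_pmf.prob ?P X = measure_pmf.prob ?P (X \<inter> UNIV \<times> Z) + measure_pmf.prob ?P (X \<inter> UNIV \<times> W)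
      + measure_pmf.prob ?P (X \<inter> UNIV \<times> N)" for X
    by (rule split3) (use part in auto)
  have tZZ: "measure_pmf.prob ?P (Ti \<inter> Z \<times> UNIV \<inter> UNIV \<times> Z) = F 0 * F 0"
  proof -
    have "Ti \<inter> Z \<times> UNIV \<inter> UNIV \<times> Z = Z \<times> Z" by (auto simp: Ti_def Z_def)
    then show ?thesis by (simp add: prob_pair_times pZ)
  qed
  have tZW: "measure_pmf.prob ?P (Ti \<inter> Z \<times> UNIV \<inter> UNIV \<times> W) = (F 0 - G (s - 1)) * (G s - F 0)"
  proof -
    have "measure_pmf.prob ?P (Ti \<inter> Z \<times> UNIV \<inter> UNIV \<times> W) = measure_pmf.prob ?P (E1 \<times> E2)"
    proof (rule sandwich[where Na="Z1 \<times> UNIV" and Nb="UNIV \<times> W1"])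
      show "E1 \<times> E2 \<subseteq> Ti \<inter> Z \<times> UNIV \<inter> UNIV \<times> W" using s_pos by (auto simp: Ti_def simps)
      show "Ti \<inter> Z \<times> UNIV \<inter> UNIV \<times> W \<subseteq> E1 \<times> E2 \<union> Z1 \<times> UNIV \<union> UNIV \<times> W1"
        by (auto simp: Ti_def simps)
      show "measure_pmf.prob ?P (Z1 \<times> UNIV) = 0" by (rule null_fst[OF pZ1]) auto
      show "measure_pmf.prob ?P (UNIV \<times> W1) = 0" by (rule null_snd[OF pW1]) auto
    qed
    then show ?thesis by (simp add: prob_pair_times pE1 pE2)
  qed
  have tWZ: "measure_pmf.prob ?P (Ti \<inter> W \<times> UNIV \<inter> UNIV \<times> Z) = (G s - F 0) * (F 0 - G (s - 1))"
  proof -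
    have "measure_pmf.prob ?P (Ti \<inter> W \<times> UNIV \<inter> UNIV \<times> Z) = measure_pmf.prob ?P (E2 \<times> E1)"
    proof (rule sandwich[where Na="W1 \<times> UNIV" and Nb="UNIV \<times> Z1"])
      show "E2 \<times> E1 \<subseteq> Ti \<inter> W \<times> UNIV \<inter> UNIV \<times> Z" using s_pos by (auto simp: Ti_def simps)
      show "Ti \<inter> W \<times> UNIV \<inter> UNIV \<times> Z \<subseteq> E2 \<times> E1 \<union> W1 \<times> UNIV \<union> UNIV \<times> Z1"
        by (auto simp: Ti_def simps)
      show "measure_pmf.prob ?P (W1 \<times> UNIV) = 0" by (rule null_fst[OF pW1]) auto
      show "measure_pmf.prob ?P (UNIV \<times> Z1) = 0" by (rule null_snd[OF pZ1]) auto
    qed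
    then show ?thesis by (simp add: prob_pair_times pE1 pE2)
  qed
  have tWW: "measure_pmf.prob ?P (Ti \<inter> W \<times> UNIV \<inter> UNIV \<times> W) = tie_prob_11 UU * (1 - F 0)^2"
  proof -
    have "Ti \<inter> W \<times> UNIV \<inter> UNIV \<times> W = Ti \<inter> W \<times> W" by auto
    moreover have "measure_pmf.prob UU W > 0" using pW h Fs1 by simp
    ultimately show ?thesis
      using tie_cond[of UU W Ti] unfolding tie11_eq W_def pW[unfolded W_def] by simp
  qed
  have n1: "measure_pmf.prob ?P (Ti \<inter> Z \<times> UNIV \<inter> UNIV \<times> N) = 0"
    by (rule null_snd[OF pN]) auto
  have n2: "measure_pmf.prob ?P (Ti \<inter> W \<times> UNIV \<inter> UNIV \<times> N) = 0"
    by (rule null_snd[OF pN]) auto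
  have n3: "measure_pmf.prob ?P (Ti \<inter> N \<times> UNIV) = 0"
    by (rule null_fst[OF pN]) auto
  note nulls = n1 n2 n3
  have PT: "measure_pmf.prob ?P Ti = F 0 * F 0 + 2 * ((F 0 - G (s - 1)) * (G s - F 0)) + tie_prob_11 UU * (1 - F 0)^2"
    using s1[of Ti] s2[of "Ti \<inter> Z \<times> UNIV"] s2[of "Ti \<inter> W \<times> UNIV"] tZZ tZW tWZ tWW nulls
    by (simp add: algebra_simps)
  have "kendall_tau UU = 1 - measure_pmf.prob ?P Ti"
    using tau_CoDi[of UU] CoDiTi[of ?P] U_no_disc unfolding Di_def by simp
  then show ?thesis unfolding PT by (simp add: power2_eq_square algebra_simps)
qed


lemma tau_L1:
  assumes h: "1 - F 0 - G 0 < 0"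
  shows "kendall_tau LL = - 2 * (1 - F 0) * (1 - G 0)"
proof -
  let ?P = "pair_pmf LL LL"
  define Xp where "Xp = {(a::nat, b::nat). 0 < a \<and> b = 0}"
  define Yp where "Yp = {(a::nat, b::nat). a = 0 \<and> 0 < b}"
  define R where "R = {(a::nat, b::nat). (a = 0 \<and> b = 0) \<or> (0 < a \<and> 0 < b)}"
  define W where "W = {(a::nat, b::nat). 0 < a \<and> 0 < b}"
  have part: "Xp \<union> Yp \<union> R = UNIV" "Xp \<inter> Yp = {}" "Xp \<inter> R = {}" "Yp \<inter> R = {}"
    by (auto simp: Xp_def Yp_def R_def)
  have Fs1: "0 \<le> F 0" "F 0 \<le> 1" "0 \<le> G 0" "G 0 \<le> 1" using F.nonneg F.le1 G.nonneg G.le1 by auto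
  note simps = gL_def F.inv_simps G.inv_simps Xp_def Yp_def R_def W_def
  have pXp: "measure_pmf.prob LL Xp = 1 - F 0"
  proof -
    have "measure_pmf.prob LL Xp = max 0 (1 - F 0)"
      by (rule pL_eval) (use Fs1 h in \<open>auto simp: simps\<close>)
    then show ?thesis using Fs1 by simp
  qed
  have pYp: "measure_pmf.prob LL Yp = 1 - G 0"
  proof -
    have "measure_pmf.prob LL Yp = max 0 ((1 - G 0) - 0)"
      by (rule pL_eval) (use Fs1 h in \<open>auto simp: simps\<close>)
    then show ?thesis using Fs1 by simp
  qed
  have pW: "measure_pmf.prob LL W = 0"
  proof -
    have "measure_pmf.prob LL W = max 0 (0 - 0)"
      by (rule pL_eval) (use Fs1 h in \<open>auto simp: simps\<close>)
    then show ?thesis by simp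
  qed
  have s1: "measure_pmf.prob ?P X = measure_pmf.prob ?P (X \<inter> Xp \<times> UNIV) + measure_pmf.prob ?P (X \<inter> Yp \<times> UNIV)
      + measure_pmf.prob ?P (X \<inter> R \<times> UNIV)" for X
    by (rule split3) (use part in auto)
  have s2: "measure_pmf.prob ?P X = measure_pmf.prob ?P (X \<inter> UNIV \<times> Xp) + measure_pmf.prob ?P (X \<inter> UNIV \<times> Yp)
      + measure_pmf.prob ?P (X \<inter> UNIV \<times> R)" for X
    by (rule split3) (use part in auto)
  have nW1: "measure_pmf.prob ?P (W \<times> UNIV) = 0" by (rule null_fst[OF pW]) auto
  have nW2: "measure_pmf.prob ?P (UNIV \<times> W) = 0" by (rule null_snd[OF pW]) auto
  have z: "measure_pmf.prob ?P {} = 0" by simp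
  have n1: "measure_pmf.prob ?P (Di \<inter> R \<times> UNIV) = 0"
    by (rule sandwich[where E="{}" and Na="W \<times> UNIV" and Nb="UNIV \<times> W", THEN trans])
       (use nW1 nW2 in \<open>auto simp:  Di_def R_def W_def\<close>)
  have n2: "measure_pmf.prob ?P (Di \<inter> Xp \<times> UNIV \<inter> UNIV \<times> R) = 0"
    by (rule sandwich[where E="{}" and Na="W \<times> UNIV" and Nb="UNIV \<times> W", THEN trans])
       (use nW1 nW2 in \<open>auto simp:  Di_def R_def W_def Xp_def\<close>)
  have n3: "measure_pmf.prob ?P (Di \<inter> Yp \<times> UNIV \<inter> UNIV \<times> R) = 0"
    by (rule sandwich[where E="{}" and Na="W \<times> UNIV" and Nb="UNIV \<times> W", THEN trans])
       (use nW1 nW2 in \<open>auto simp:  Di_def R_def W_def Yp_def\<close>)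
  have e1: "Di \<inter> Xp \<times> UNIV \<inter> UNIV \<times> Xp = {}" "Di \<inter> Yp \<times> UNIV \<inter> UNIV \<times> Yp = {}"
    by (auto simp: Di_def Xp_def Yp_def)
  have e2: "Di \<inter> Xp \<times> UNIV \<inter> UNIV \<times> Yp = Xp \<times> Yp" "Di \<inter> Yp \<times> UNIV \<inter> UNIV \<times> Xp = Yp \<times> Xp"
    by (auto simp: Di_def Xp_def Yp_def)
  have PD: "measure_pmf.prob ?P Di = 2 * ((1 - F 0) * (1 - G 0))"
    using s1[of Di] s2[of "Di \<inter> Xp \<times> UNIV"] s2[of "Di \<inter> Yp \<times> UNIV"] n1 n2 n3 e1 e2
    by (simp add: prob_pair_times pXp pYp)
  have "kendall_tau LL = - measure_pmf.prob ?P Di"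
    using tau_CoDi[of LL] L_no_conc unfolding Co_def by simp
  then show ?thesis unfolding PD by (simp add: algebra_simps)
qed


lemma tau_L2:
  assumes h: "1 - F 0 - G 0 > 0" "F s + G 0 - 1 > 0" "F (s - 1) + G 0 - 1 \<le> 0"
     "G t + F 0 - 1 > 0" "G (t - 1) + F 0 - 1 \<le> 0"
  shows "kendall_tau LL = (F 0)^2 + (G 0)^2 - 1 + (1 - F 0 - G 0)^2 * tie_prob_11 LL
          + 2 * ((F s + G 0 - 1) * (1 - G 0 - F (s - 1)) + (G t + F 0 - 1) * (1 - F 0 - G (t - 1)))"
proof -
  let ?P = "pair_pmf LL LL"
  define X0 where "X0 = {(a::nat, b::nat). a = 0}"
  define Y0 where "Y0 = {(a::nat, b::nat). 0 < a \<and> b = 0}"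
  define W where "W = {(a::nat, b::nat). 0 < a \<and> 0 < b}"
  define Oz where "Oz = {(a::nat, b::nat). a = 0 \<and> b = 0}"
  define E1 where "E1 = {(a::nat, b::nat). a = 0 \<and> int b = t}"
  define E2 where "E2 = {(a::nat, b::nat). 0 < a \<and> int b = t}"
  define X1 where "X1 = {(a::nat, b::nat). a = 0 \<and> int b < t}"
  define W1 where "W1 = {(a::nat, b::nat). 0 < a \<and> 0 < b \<and> t < int b}"
  define E3 where "E3 = {(a::nat, b::nat). int a = s \<and> b = 0}"
  define E4 where "E4 = {(a::nat, b::nat). int a = s \<and> 0 < b}"
  define Y1 where "Y1 = {(a::nat, b::nat). 0 < a \<and> b = 0 \<and> int a < s}"
  define W2 where "W2 = {(a::nat, b::nat). 0 < a \<and> 0 < b \<and> s < int a}"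
  have part: "X0 \<union> Y0 \<union> W = UNIV" "X0 \<inter> Y0 = {}" "X0 \<inter> W = {}" "Y0 \<inter> W = {}"
    by (auto simp: X0_def Y0_def W_def)
  have s_pos: "0 < s"
  proof (rule ccontr)
    assume "\<not> 0 < s" then have "F s \<le> F 0" using F.mono[of s 0] by simp
    then show False using h by simp
  qed
  have t_pos: "0 < t"
  proof (rule ccontr)
    assume "\<not> 0 < t" then have "G t \<le> G 0" using G.mono[of t 0] by simp
    then show False using h by simp
  qed
  have Fs1: "0 \<le> F 0" "F 0 \<le> 1" "0 \<le> G 0" "G 0 \<le> 1" "0 \<le> F (s - 1)" "F s \<le> 1" "0 \<le> G (t - 1)" "G t \<le> 1"
    using F.nonneg F.le1 G.nonneg G.le1 by auto
  note simps = gL_def F.inv_simps G.inv_simps X0_def Y0_def W_def Oz_def E1_def E2_def X1_def W1_def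
    E3_def E4_def Y1_def W2_def
  have pX0: "measure_pmf.prob LL X0 = F 0"
  proof -
    have "measure_pmf.prob LL X0 = max 0 (F 0 - 0)"
      by (rule pL_eval) (use Fs1 h in \<open>auto simp: simps\<close>)
    then show ?thesis using Fs1 by simp
  qed
  have pY0: "measure_pmf.prob LL Y0 = G 0"
  proof -
    have "measure_pmf.prob LL Y0 = max 0 (1 - (1 - G 0))"
      by (rule pL_eval) (use Fs1 h in \<open>auto simp: simps\<close>)
    then show ?thesis using Fs1 by simp
  qed
  have pW: "measure_pmf.prob LL W = 1 - F 0 - G 0"
  proof -
    have "measure_pmf.prob LL W = max 0 ((1 - G 0) - F 0)"
      by (rule pL_eval) (use Fs1 h in \<open>auto simp: simps\<close>)
    then show ?thesis using h by simp
  qed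
  have pO: "measure_pmf.prob LL Oz = 0"
  proof -
    have "measure_pmf.prob LL Oz = max 0 (0 - 0)"
      by (rule pL_eval) (use Fs1 h in \<open>auto simp: simps\<close>)
    then show ?thesis by simp
  qed
  have pE1: "measure_pmf.prob LL E1 = G t + F 0 - 1"
  proof -
    have "measure_pmf.prob LL E1 = max 0 (F 0 - (1 - G t))"
      by (rule pL_eval) (use Fs1 h in \<open>auto simp: simps\<close>)
    then show ?thesis using h by simp
  qed
  have pE2: "measure_pmf.prob LL E2 = 1 - F 0 - G (t - 1)"
  proof -
    have "measure_pmf.prob LL E2 = max 0 ((1 - G (t - 1)) - F 0)"
      by (rule pL_eval) (use Fs1 h in \<open>auto simp: simps\<close>)
    then show ?thesis using h by simp
  qed
  have pX1: "measure_pmf.prob LL X1 = 0"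
  proof -
    have "measure_pmf.prob LL X1 = max 0 (F 0 - (1 - G (t - 1)))"
      by (rule pL_eval) (use Fs1 h in \<open>auto simp: simps\<close>)
    then show ?thesis using h by simp
  qed
  have pW1: "measure_pmf.prob LL W1 = 0"
  proof -
    have "measure_pmf.prob LL W1 = max 0 (0 - 0)"
      by (rule pL_eval) (use Fs1 h in \<open>auto simp: simps\<close>)
    then show ?thesis by simp
  qed
  have pE3: "measure_pmf.prob LL E3 = F s + G 0 - 1"
  proof -
    have "measure_pmf.prob LL E3 = max 0 (F s - (1 - G 0))"
      by (rule pL_eval) (use Fs1 h in \<open>auto simp: simps\<close>)
    then show ?thesis using h by simp
  qed
  have pE4: "measure_pmf.prob LL E4 = 1 - G 0 - F (s - 1)"
  proof -
    have "measure_pmf.prob LL E4 = max 0 ((1 - G 0) - F (s - 1))"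
      by (rule pL_eval) (use Fs1 h in \<open>auto simp: simps\<close>)
    then show ?thesis using h by simp
  qed
  have pY1: "measure_pmf.prob LL Y1 = 0"
  proof -
    have "measure_pmf.prob LL Y1 = max 0 (F (s - 1) - (1 - G 0))"
      by (rule pL_eval) (use Fs1 h in \<open>auto simp: simps\<close>)
    then show ?thesis using h by simp
  qed
  have pW2: "measure_pmf.prob LL W2 = 0"
  proof -
    have "measure_pmf.prob LL W2 = max 0 (0 - 0)"
      by (rule pL_eval) (use Fs1 h in \<open>auto simp: simps\<close>)
    then show ?thesis by simp
  qed
  have s1: "measure_pmf.prob ?P X = measure_pmf.prob ?P (X \<inter> X0 \<times> UNIV) + measure_pmf.prob ?P (X \<inter> Y0 \<times> UNIV)
      + measure_pmf.prob ?P (X \<inter> W \<times> UNIV)" for X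
    by (rule split3) (use part in auto)
  have s2: "measure_pmf.prob ?P X = measure_pmf.prob ?P (X \<inter> UNIV \<times> X0) + measure_pmf.prob ?P (X \<inter> UNIV \<times> Y0)
      + measure_pmf.prob ?P (X \<inter> UNIV \<times> W)" for X
    by (rule split3) (use part in auto)
  have nO1: "measure_pmf.prob ?P (Oz \<times> UNIV) = 0" by (rule null_fst[OF pO]) auto
  have nO2: "measure_pmf.prob ?P (UNIV \<times> Oz) = 0" by (rule null_snd[OF pO]) auto
  have tXX: "measure_pmf.prob ?P (Ti \<inter> X0 \<times> UNIV \<inter> UNIV \<times> X0) = F 0 * F 0"
  proof -
    have "Ti \<inter> X0 \<times> UNIV \<inter> UNIV \<times> X0 = X0 \<times> X0" by (auto simp: Ti_def X0_def)
    then show ?thesis by (simp add: prob_pair_times pX0)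
  qed
  have tYY: "measure_pmf.prob ?P (Ti \<inter> Y0 \<times> UNIV \<inter> UNIV \<times> Y0) = G 0 * G 0"
  proof -
    have "Ti \<inter> Y0 \<times> UNIV \<inter> UNIV \<times> Y0 = Y0 \<times> Y0" by (auto simp: Ti_def Y0_def)
    then show ?thesis by (simp add: prob_pair_times pY0)
  qed
  have tXY: "measure_pmf.prob ?P (Ti \<inter> X0 \<times> UNIV \<inter> UNIV \<times> Y0) = 0"
    by (rule sandwich[where E="{}" and Na="Oz \<times> UNIV" and Nb="UNIV \<times> Oz", THEN trans])
       (use nO1 nO2 in \<open>auto simp: Ti_def X0_def Y0_def Oz_def\<close>)
  have tYX: "measure_pmf.prob ?P (Ti \<inter> Y0 \<times> UNIV \<inter> UNIV \<times> X0) = 0"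
    by (rule sandwich[where E="{}" and Na="Oz \<times> UNIV" and Nb="UNIV \<times> Oz", THEN trans])
       (use nO1 nO2 in \<open>auto simp: Ti_def X0_def Y0_def Oz_def\<close>)
  have tXW: "measure_pmf.prob ?P (Ti \<inter> X0 \<times> UNIV \<inter> UNIV \<times> W) = (G t + F 0 - 1) * (1 - F 0 - G (t - 1))"
  proof -
    have "measure_pmf.prob ?P (Ti \<inter> X0 \<times> UNIV \<inter> UNIV \<times> W) = measure_pmf.prob ?P (E1 \<times> E2)"
    proof (rule sandwich[where Na="X1 \<times> UNIV" and Nb="UNIV \<times> W1"])
      show "E1 \<times> E2 \<subseteq> Ti \<inter> X0 \<times> UNIV \<inter> UNIV \<times> W" using t_pos by (auto simp: Ti_def simps)
      show "Ti \<inter> X0 \<times> UNIV \<inter> UNIV \<times> W \<subseteq> E1 \<times> E2 \<union> X1 \<times> UNIV \<union> UNIV \<times> W1"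
        by (auto simp: Ti_def simps)
      show "measure_pmf.prob ?P (X1 \<times> UNIV) = 0" by (rule null_fst[OF pX1]) auto
      show "measure_pmf.prob ?P (UNIV \<times> W1) = 0" by (rule null_snd[OF pW1]) auto
    qed
    then show ?thesis by (simp add: prob_pair_times pE1 pE2)
  qed
  have tWX: "measure_pmf.prob ?P (Ti \<inter> W \<times> UNIV \<inter> UNIV \<times> X0) = (1 - F 0 - G (t - 1)) * (G t + F 0 - 1)"
  proof -
    have "measure_pmf.prob ?P (Ti \<inter> W \<times> UNIV \<inter> UNIV \<times> X0) = measure_pmf.prob ?P (E2 \<times> E1)"
    proof (rule sandwich[where Na="W1 \<times> UNIV" and Nb="UNIV \<times> X1"])
      show "E2 \<times> E1 \<subseteq> Ti \<inter> W \<times> UNIV \<inter> UNIV \<times> X0" using t_pos by (auto simp: Ti_def simps)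
      show "Ti \<inter> W \<times> UNIV \<inter> UNIV \<times> X0 \<subseteq> E2 \<times> E1 \<union> W1 \<times> UNIV \<union> UNIV \<times> X1"
        by (auto simp: Ti_def simps)
      show "measure_pmf.prob ?P (W1 \<times> UNIV) = 0" by (rule null_fst[OF pW1]) auto
      show "measure_pmf.prob ?P (UNIV \<times> X1) = 0" by (rule null_snd[OF pX1]) auto
    qed
    then show ?thesis by (simp add: prob_pair_times pE1 pE2)
  qed
  have tYW: "measure_pmf.prob ?P (Ti \<inter> Y0 \<times> UNIV \<inter> UNIV \<times> W) = (F s + G 0 - 1) * (1 - G 0 - F (s - 1))"
  proof -
    have "measure_pmf.prob ?P (Ti \<inter> Y0 \<times> UNIV \<inter> UNIV \<times> W) = measure_pmf.prob ?P (E3 \<times> E4)"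
    proof (rule sandwich[where Na="Y1 \<times> UNIV" and Nb="UNIV \<times> W2"])
      show "E3 \<times> E4 \<subseteq> Ti \<inter> Y0 \<times> UNIV \<inter> UNIV \<times> W" using s_pos by (auto simp: Ti_def simps)
      show "Ti \<inter> Y0 \<times> UNIV \<inter> UNIV \<times> W \<subseteq> E3 \<times> E4 \<union> Y1 \<times> UNIV \<union> UNIV \<times> W2"
        by (auto simp: Ti_def simps)
      show "measure_pmf.prob ?P (Y1 \<times> UNIV) = 0" by (rule null_fst[OF pY1]) auto
      show "measure_pmf.prob ?P (UNIV \<times> W2) = 0" by (rule null_snd[OF pW2]) auto
    qed
    then show ?thesis by (simp add: prob_pair_times pE3 pE4)
  qed
  have tWY: "measure_pmf.prob ?P (Ti \<inter> W \<times> UNIV \<inter> UNIV \<times> Y0) = (1 - G 0 - F (s - 1)) * (F s + G 0 - 1)"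
  proof -
    have "measure_pmf.prob ?P (Ti \<inter> W \<times> UNIV \<inter> UNIV \<times> Y0) = measure_pmf.prob ?P (E4 \<times> E3)"
    proof (rule sandwich[where Na="W2 \<times> UNIV" and Nb="UNIV \<times> Y1"])
      show "E4 \<times> E3 \<subseteq> Ti \<inter> W \<times> UNIV \<inter> UNIV \<times> Y0" using s_pos by (auto simp: Ti_def simps)
      show "Ti \<inter> W \<times> UNIV \<inter> UNIV \<times> Y0 \<subseteq> E4 \<times> E3 \<union> W2 \<times> UNIV \<union> UNIV \<times> Y1"
        by (auto simp: Ti_def simps)
      show "measure_pmf.prob ?P (W2 \<times> UNIV) = 0" by (rule null_fst[OF pW2]) auto
      show "measure_pmf.prob ?P (UNIV \<times> Y1) = 0" by (rule null_snd[OF pY1]) auto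
    qed
    then show ?thesis by (simp add: prob_pair_times pE3 pE4)
  qed
  have tWW: "measure_pmf.prob ?P (Ti \<inter> W \<times> UNIV \<inter> UNIV \<times> W) = tie_prob_11 LL * (1 - F 0 - G 0)^2"
  proof -
    have "Ti \<inter> W \<times> UNIV \<inter> UNIV \<times> W = Ti \<inter> W \<times> W" by auto
    moreover have "measure_pmf.prob LL W > 0" using pW h by simp
    ultimately show ?thesis
      using tie_cond[of LL W Ti] unfolding tie11_eq W_def pW[unfolded W_def] by simp
  qed
  have PT: "measure_pmf.prob ?P Ti = F 0 * F 0 + G 0 * G 0 + tie_prob_11 LL * (1 - F 0 - G 0)^2
      + 2 * ((G t + F 0 - 1) * (1 - F 0 - G (t - 1))) + 2 * ((F s + G 0 - 1) * (1 - G 0 - F (s - 1)))"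
    using s1[of Ti] s2[of "Ti \<inter> X0 \<times> UNIV"] s2[of "Ti \<inter> Y0 \<times> UNIV"] s2[of "Ti \<inter> W \<times> UNIV"]
      tXX tYY tXY tYX tXW tWX tYW tWY tWW
    by (simp add: algebra_simps)
  have "kendall_tau LL = measure_pmf.prob ?P Ti - 1"
    using tau_CoDi[of LL] CoDiTi[of ?P] L_no_conc unfolding Co_def by simp
  then show ?thesis unfolding PT by (simp add: power2_eq_square algebra_simps)
qed

end


lemma zi_dcdf:
  fixes piF :: real and PF :: "nat pmf" and F :: "int \<Rightarrow> real"
  assumes piF: "0 \<le> piF" "piF \<le> 1"
    and F_def: "\<And>s. F s = (if s < 0 then 0 else (1 - piF) + piF * nat_cdf PF s)"
  shows "dcdf F"
proof
  have c01: "0 \<le> nat_cdf PF s" "nat_cdf PF s \<le> 1" for s by (auto simp: nat_cdf_def)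
  have cm: "nat_cdf PF s \<le> nat_cdf PF t" if "s \<le> t" for s t
    unfolding nat_cdf_def by (rule measure_pmf.finite_measure_mono) (use that in auto)
  have Fnn: "0 \<le> F s" for s
    using c01[of s] piF by (auto simp: F_def intro!: add_nonneg_nonneg)
  show "\<And>s. s < 0 \<Longrightarrow> F s = 0" by (simp add: F_def)
  show "F s \<le> F t" if "s \<le> t" for s t
  proof (cases "s < 0")
    case True then show ?thesis using Fnn[of t] by (simp add: F_def)
  next
    case False
    then show ?thesis using that cm[OF that] piF by (auto simp: F_def intro!: mult_left_mono)
  qed
  show "F s \<le> 1" for s
  proof -
    have "piF * nat_cdf PF s \<le> piF * 1" using c01[of s] piF by (intro mult_left_mono) auto
    then show ?thesis by (auto simp: F_def)
  qed
  show "\<exists>n::nat. v < F (int n)" if v: "v < 1" for v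
  proof -
    have "(\<lambda>i. measure_pmf.prob PF {..i}) \<longlonglongrightarrow> measure_pmf.prob PF (\<Union>i. {..i})"
      by (rule measure_pmf.finite_Lim_measure_incseq) (auto simp: incseq_def)
    moreover have "(\<Union>i. {..i::nat}) = UNIV" by auto
    ultimately have "(\<lambda>i. measure_pmf.prob PF {..i}) \<longlonglongrightarrow> 1" by simp
    moreover have "nat_cdf PF (int i) = measure_pmf.prob PF {..i}" for i
      unfolding nat_cdf_def by (rule arg_cong[where f="measure_pmf.prob PF"]) auto
    ultimately have "(\<lambda>i. nat_cdf PF (int i)) \<longlonglongrightarrow> 1" by simp
    then have "(\<lambda>i. (1 - piF) + piF * nat_cdf PF (int i)) \<longlonglongrightarrow> (1 - piF) + piF * 1"
      by (intro tendsto_intros)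
    then have "(\<lambda>i. F (int i)) \<longlonglongrightarrow> 1" by (simp add: F_def)
    from order_tendstoD(1)[OF this v] obtain n where "v < F (int n)"
      by (auto simp: eventually_sequentially)
    then show ?thesis by blast
  qed
qed

theorem proposition1:
  fixes piF piG :: real and PF PG :: "nat pmf" and F G :: "int \<Rightarrow> real" and p1 p2 :: real
  assumes piF: "0 \<le> piF" "piF \<le> 1" and piG: "0 \<le> piG" "piG \<le> 1"
    and F_def: "\<And>s. F s = (if s < 0 then 0 else (1 - piF) + piF * nat_cdf PF s)"
    and G_def: "\<And>t. G t = (if t < 0 then 0 else (1 - piG) + piG * nat_cdf PG t)"
    and p1_def: "p1 = F 0" and p2_def: "p2 = G 0"
  shows
    "(p1 \<le> p2 \<longrightarrow> (\<forall>s. F s > p2 \<and> F (s - 1) \<le> p2 \<longrightarrow>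
        (SUP H\<in>couplings F G. kendall_tau H) =
          (1 - p2^2) - (1 - p2)^2 * tie_prob_11 (FH_upper F G)
          - 2 * (p2 - F (s - 1)) * (F s - p2)))
   \<and> (p1 \<ge> p2 \<longrightarrow> (\<forall>t. G t > p1 \<and> G (t - 1) \<le> p1 \<longrightarrow>
        (SUP H\<in>couplings F G. kendall_tau H) =
          (1 - p1^2) - (1 - p1)^2 * tie_prob_11 (FH_upper F G)
          - 2 * (p1 - G (t - 1)) * (G t - p1)))
   \<and> (1 - p1 - p2 < 0 \<longrightarrow>
        (INF H\<in>couplings F G. kendall_tau H) = - 2 * (1 - p1) * (1 - p2))
   \<and> (1 - p1 - p2 > 0 \<longrightarrow> (\<forall>s' t'.
        F s' + p2 - 1 > 0 \<and> F (s' - 1) + p2 - 1 \<le> 0 \<and>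
        G t' + p1 - 1 > 0 \<and> G (t' - 1) + p1 - 1 \<le> 0 \<longrightarrow>
        (INF H\<in>couplings F G. kendall_tau H) =
          p1^2 + p2^2 - 1 + (1 - p1 - p2)^2 * tie_prob_11 (FH_lower F G)
          + 2 * ((F s' + p2 - 1) * (1 - p2 - F (s' - 1))
                 + (G t' + p1 - 1) * (1 - p1 - G (t' - 1)))))"
proof -
  interpret T: two F G
    unfolding two_def using zi_dcdf[OF piF F_def] zi_dcdf[OF piG G_def] by blast
  show ?thesis
    unfolding p1_def p2_def
    using T.sup_U T.inf_L T.tau_U1 T.tau_U2 T.tau_L1 T.tau_L2 unfolding T.UU_def T.LL_def
    by auto
qed

end
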